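(* In the acoustic setting, suppose $A<0$ near $\rho_1\in(\rho_-,\rho_+)$, $B(\rho_1)>0$, and $A(\rho)+1=C(\rho)(\rho-\rho_1)^2$ near $\rho_1$ with $C(\rho)>0$ (a double root of $A=-1$). Then the circle $\rho=\rho_1$ is a horizon of the $(+)$ family (i.e. $\rho^+(t)\equiv\rho_1$ is a solution, with $d\varphi^+/dt=B(\rho_1)/\rho_1\neq 0$), and $d\rho^+/dt>0$ for all $\rho\neq\rho_1$ in a neighborhood of $\rho_1$; consequently $(+)$ trajectories starting slightly below $\rho_1$ satisfy $\rho^+(t)\to\rho_1$ as $t\to+\infty$, and those starting slightly above satisfy $\rho^+(t)\to\rho_1$ as $t\to-\infty$.
   Context: Acoustic metric in the plane with polar coordinates $(\rho,\varphi)$: Hamiltonian $H=(\tau+A\xi_\rho+B\xi_\varphi/\rho)^2-\xi_\rho^2-(\xi_\varphi/\rho)^2$, $A=A(\rho)$, $B=B(\rho)$ smooth. The ergoregion is the annulus $\rho_-<\rho<\rho_+$ where $A^2+B^2>1$. Zero-energy null geodesics are the null bicharacteristics with $\tau=0$ parametrized by $t$; the sign in $\xi_\rho=\frac{-AB\pm\sqrt{A^2+B^2-1}}{A^2-1}\,\xi_\varphi/\rho$ defines the $(\pm)$ family. With $s=\sqrt{A^2+B^2-1}$, the equations of motion in the ergoregion are $$\frac{d\rho^\pm}{dt}=\frac{A(A^2+B^2-1)\pm Bs}{A^2+B^2},\qquad \frac{d\varphi^\pm}{dt}=\frac{s\,(Bs\mp A)}{\rho\,(A^2+B^2)}.$$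 A horizon of the $(\pm)$ family is a circle $\{\rho=c\}$ in the ergoregion which is a closed trajectory of that family. *)

theory Defs
  imports "HOL-Analysis.Analysis"
begin

definition smooth_on :: "real set \<Rightarrow> (real \<Rightarrow> real) \<Rightarrow> bool" where
  "smooth_on S f \<longleftrightarrow> (\<forall>n. \<forall>x\<in>S. ((deriv ^^ n) f) differentiable (at x))"

definition sfun :: "(real \<Rightarrow> real) \<Rightarrow> (real \<Rightarrow> real) \<Rightarrow> real \<Rightarrow> real" where
  "sfun A B r = sqrt ((A r)\<^sup>2 + (B r)\<^sup>2 - 1)"

text \<open>Right-hand sides of the equations of motion of the (+) family in the ergoregion.\<close>
definition vrho_plus :: "(real \<Rightarrow> real) \<Rightarrow> (real \<Rightarrow> real) \<Rightarrow> real \<Rightarrow> real" where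
  "vrho_plus A B r =
     (A r * ((A r)\<^sup>2 + (B r)\<^sup>2 - 1) + B r * sfun A B r) / ((A r)\<^sup>2 + (B r)\<^sup>2)"

definition vphi_plus :: "(real \<Rightarrow> real) \<Rightarrow> (real \<Rightarrow> real) \<Rightarrow> real \<Rightarrow> real" where
  "vphi_plus A B r =
     sfun A B r * (B r * sfun A B r - A r) / (r * ((A r)\<^sup>2 + (B r)\<^sup>2))"

text \<open>(rho, phi) is a (+) zero-energy null geodesic on the parameter set I,
  staying in the ergoregion annulus rm < rho < rp.\<close>
definition plus_trajectory ::
  "(real \<Rightarrow> real) \<Rightarrow> (real \<Rightarrow> real) \<Rightarrow> real \<Rightarrow> real \<Rightarrow> real set
     \<Rightarrow> (real \<Rightarrow> real) \<Rightarrow> (real \<Rightarrow> real) \<Rightarrow> bool" where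
  "plus_trajectory A B rm rp I rho phi \<longleftrightarrow>
     (\<forall>t\<in>I. rm < rho t \<and> rho t < rp \<and>
        (rho has_real_derivative vrho_plus A B (rho t)) (at t within I) \<and>
        (phi has_real_derivative vphi_plus A B (rho t)) (at t within I))"

definition horizon_plus ::
  "(real \<Rightarrow> real) \<Rightarrow> (real \<Rightarrow> real) \<Rightarrow> real \<Rightarrow> real \<Rightarrow> real \<Rightarrow> bool" where
  "horizon_plus A B rm rp c \<longleftrightarrow> rm < c \<and> c < rp \<and>
     (\<exists>phi. plus_trajectory A B rm rp UNIV (\<lambda>t. c) phi \<and>
        (\<lambda>t. (c * cos (phi t), c * sin (phi t))) ` UNIV = {p :: real \<times> real. norm p = c})"

end

theory Submission
  imports Defs "HOL-Analysis.Analysis"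
begin


lemma within_cont_on:
  assumes der: "\<And>t. 0 \<le> t \<Longrightarrow> (u has_real_derivative u' t) (at t within {0..})"
  shows "continuous_on {0..} u"
  using der by (auto simp: continuous_on_eq_continuous_within intro: DERIV_continuous)

lemma nonincr_help:
  fixes u u' :: "real \<Rightarrow> real"
  assumes der: "\<And>t. 0 \<le> t \<Longrightarrow> (u has_real_derivative u' t) (at t within {0..})"
    and st: "0 \<le> s" "s \<le> t" and neg: "\<And>x. s < x \<Longrightarrow> x < t \<Longrightarrow> u' x \<le> 0"
  shows "u t \<le> u s"
proof -
  have "(\<lambda>x. - u x) s \<le> (\<lambda>x. - u x) t"
  proof (rule DERIV_nonneg_imp_increasing_open[OF st(2)])
    fix x assume x: "s < x" "x < t"
    have "at x within {0..} = at x" using x st by (intro at_within_interior) auto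
    then have "(u has_real_derivative u' x) (at x)" using der[of x] x st by simp
    then have "((\<lambda>x. - u x) has_real_derivative - u' x) (at x)" by (rule DERIV_minus)
    then show "\<exists>y. ((\<lambda>x. - u x) has_real_derivative y) (at x) \<and> 0 \<le> y" using neg[OF x] by auto
  next
    have "continuous_on {0..} u" by (rule within_cont_on[of u u']) (rule der)
    then have "continuous_on {s..t} u" by (rule continuous_on_subset) (use st in auto)
    then show "continuous_on {s..t} (\<lambda>x. - u x)" by (rule continuous_on_minus)
  qed
  then show ?thesis by simp
qed

lemma decay:
  fixes u u' :: "real \<Rightarrow> real"
  assumes der: "\<And>t. 0 \<le> t \<Longrightarrow> (u has_real_derivative u' t) (at t within {0..})"
    and u0: "0 < u 0" "u 0 < d"
    and bnd: "\<And>t. 0 \<le> t \<Longrightarrow> 0 < u t \<Longrightarrow> u t < d \<Longrightarrow> - K * u t \<le> u' t \<and> u' t \<le> 0"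
  shows "\<forall>t\<ge>0. 0 < u t \<and> u t \<le> u 0"
proof (rule ccontr)
  assume nt: "\<not> ?thesis"
  define T where "T = {t. 0 \<le> t \<and> \<not> (0 < u t \<and> u t \<le> u 0)}"
  have Tne: "T \<noteq> {}" using nt by (auto simp: T_def)
  have Tb: "bdd_below T" by (auto simp: T_def bdd_below_def)
  define ts where "ts = Inf T"
  have ts0: "0 \<le> ts" unfolding ts_def using Tne by (intro cInf_greatest) (auto simp: T_def)
  have good: "0 < u x \<and> u x \<le> u 0" if "0 \<le> x" "x < ts" for x
  proof (rule ccontr)
    assume "\<not> ?thesis"
    then have "x \<in> T" using that by (auto simp: T_def)
    then have "ts \<le> x" unfolding ts_def using Tb by (rule cInf_lower)
    then show False using that by simp
  qed
  have goodts: "0 < u ts \<and> u ts \<le> u 0"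
  proof (cases "ts = 0")
    case True then show ?thesis using u0 by simp
  next
    case False
    then have tp: "0 < ts" using ts0 by simp
    have "u ts \<le> u 0"
    proof (rule nonincr_help[OF der])
      fix x assume x: "0 < x" "x < ts"
      then have "0 < u x" "u x < d" using good[of x] u0 by auto
      then show "u' x \<le> 0" using bnd[of x] x by auto
    qed (use ts0 in auto)
    moreover have "0 < u ts"
    proof -
      define g where "g x = u x * exp (K * x)" for x
      define g' where "g' x = u' x * exp (K * x) + u x * (K * exp (K * x))" for x
      have dg: "(g has_real_derivative g' x) (at x within {0..})" if x0: "0 \<le> x" for x
      proof -
        have d1: "(u has_real_derivative u' x) (at x within {0..})" using der[OF x0] .
        show ?thesis unfolding g_def g'_def using d1 by (auto intro!: derivative_eq_intros)
      qed
      have "- g ts \<le> - g 0"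
      proof (rule nonincr_help[of "\<lambda>x. - g x" "\<lambda>x. - g' x"])
        fix t :: real assume "0 \<le> t"
        show "((\<lambda>x. - g x) has_real_derivative - g' t) (at t within {0..})"
          using DERIV_minus[OF dg[OF \<open>0 \<le> t\<close>]] .
      next
        fix x assume x: "0 < x" "x < ts"
        have "0 < u x" "u x < d" using good[of x] x u0 by auto
        then have "- K * u x \<le> u' x" using bnd[of x] x by auto
        then have "0 \<le> (u' x + K * u x) * exp (K * x)" by simp
        then show "- g' x \<le> 0" by (simp add: g'_def algebra_simps)
      qed (use tp in auto)
      then have "u 0 \<le> u ts * exp (K * ts)" by (simp add: g_def)
      then have "0 < u ts * exp (K * ts)" using u0 by linarith
      then show ?thesis by (simp add: zero_less_mult_iff)
    qed
    ultimately show ?thesis by simp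
  qed
  have "continuous (at ts within {0..}) u" using der[OF ts0] by (rule DERIV_continuous)
  moreover have "0 < u ts" "u ts < d" using goodts u0 by auto
  ultimately have "\<forall>\<^sub>F x in at ts within {0..}. 0 < u x \<and> u x < d"
    unfolding continuous_within by (intro eventually_conj order_tendstoD) auto
  then obtain e where e: "e > 0" and ee: "\<And>x. x \<in> {0..} \<Longrightarrow> x \<noteq> ts \<Longrightarrow> dist x ts < e \<Longrightarrow> 0 < u x \<and> u x < d"
    unfolding eventually_at by blast
  have goodR: "0 < u x \<and> u x \<le> u 0" if "ts \<le> x" "x < ts + e" for x
  proof (cases "x = ts")
    case True then show ?thesis using goodts by simp
  next
    case False
    have "0 < u x" using ee[of x] that ts0 False by (auto simp: dist_real_def)
    moreover have "u x \<le> u ts"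
    proof (rule nonincr_help[OF der ts0 that(1)])
      fix y assume "ts < y" "y < x"
      then show "u' y \<le> 0" using ee[of y] bnd[of y] that ts0 by (auto simp: dist_real_def)
    qed
    ultimately show ?thesis using goodts by simp
  qed
  have "ts + e \<le> ts" unfolding ts_def
  proof (rule cInf_greatest[OF Tne])
    fix x assume x: "x \<in> T"
    then have "ts \<le> x" unfolding ts_def using Tb by (rule cInf_lower)
    have "x \<notin> {ts..<ts+e}"
    proof
      assume "x \<in> {ts..<ts+e}"
      then have "0 < u x \<and> u x \<le> u 0" using goodR by auto
      then show False using x by (simp add: T_def)
    qed
    then show "Inf T + e \<le> x" using \<open>ts \<le> x\<close> unfolding ts_def[symmetric] by auto
  qed
  then show False using e by simp
qed

lemma conv:
  fixes u u' :: "real \<Rightarrow> real"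
  assumes der: "\<And>t. 0 \<le> t \<Longrightarrow> (u has_real_derivative u' t) (at t within {0..})"
    and good: "\<forall>t\<ge>0. 0 < u t \<and> u t \<le> u 0"
    and neg: "\<And>t. 0 \<le> t \<Longrightarrow> u' t \<le> 0"
    and steep: "\<And>\<epsilon>. 0 < \<epsilon> \<Longrightarrow> \<exists>m>0. \<forall>t\<ge>0. \<epsilon> \<le> u t \<longrightarrow> u' t \<le> - m"
  shows "(u \<longlongrightarrow> 0) at_top"
proof (rule order_tendstoI)
  fix a :: real assume a0: "a < 0"
  show "\<forall>\<^sub>F x in at_top. a < u x" unfolding eventually_at_top_linorder
  proof (intro exI[of _ "0::real"] allI impI)
    fix x :: real assume "0 \<le> x"
    then have "0 < u x" using good by blast
    then show "a < u x" using a0 by linarith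
  qed
next
  fix \<epsilon> :: real assume ep: "0 < \<epsilon>"
  obtain m where m: "m > 0" "\<forall>t\<ge>0. \<epsilon> \<le> u t \<longrightarrow> u' t \<le> - m" using steep[OF ep] by blast
  have "\<exists>T\<ge>0. u T < \<epsilon>"
  proof (rule ccontr)
    assume "\<not> ?thesis"
    then have ge: "\<And>t. 0 \<le> t \<Longrightarrow> \<epsilon> \<le> u t" by (meson not_le)
    define t where "t = u 0 / m + 1"
    have "0 < u 0" using good by auto
    then have t0: "0 \<le> t" using m unfolding t_def by (smt (verit) divide_pos_pos)
    have "(\<lambda>x. u x + m * x) t \<le> (\<lambda>x. u x + m * x) 0"
    proof (rule nonincr_help[of "\<lambda>x. u x + m * x" "\<lambda>x. u' x + m" 0 t])
      fix t :: real assume t0: "0 \<le> t"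
      have d1: "(u has_real_derivative u' t) (at t within {0..})" using der[OF t0] .
      show "((\<lambda>x. u x + m * x) has_real_derivative u' t + m) (at t within {0..})"
        using d1 by (auto intro!: derivative_eq_intros)
    next
      fix x assume "0 < x" "x < t"
      then have "\<epsilon> \<le> u x" using ge by auto
      then have "u' x \<le> - m" using m(2) \<open>0 < x\<close> by simp
      then show "u' x + m \<le> 0" by simp
    qed (use t0 in auto)
    then have "u t + m * t \<le> u 0" by simp
    moreover have "m * t = u 0 + m" using m by (simp add: t_def field_simps)
    moreover have "0 < u t" using good t0 by auto
    ultimately show False using m by linarith
  qed
  then obtain T where T: "T \<ge> 0" "u T < \<epsilon>" by blast
  show "\<forall>\<^sub>F x in at_top. u x < \<epsilon>"
    unfolding eventually_at_top_linorder
  proof (intro exI allI impI)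
    fix x assume "T \<le> x"
    then have "u x \<le> u T" using nonincr_help[OF der T(1), of x] neg T by auto
    then show "u x < \<epsilon>" using T by simp
  qed
qed


lemma antider:
  fixes a b :: ereal and h :: "real \<Rightarrow> real"
  assumes "a < b" and "\<And>x :: real. a < x \<Longrightarrow> x < b \<Longrightarrow> isCont h x"
  shows "\<exists>F. \<forall>x :: real. a < x \<longrightarrow> x < b \<longrightarrow> (F has_real_derivative h x) (at x)"
  using einterval_antiderivative[OF assms] by (simp add: has_real_derivative_iff_has_vector_derivative)

lemma exist_fwd:
  fixes v g :: "real \<Rightarrow> real"
  assumes d: "0 < d"
    and vc: "\<And>x. c - d < x \<Longrightarrow> x < c \<Longrightarrow> isCont v x"
    and vpos: "\<And>x. c - d < x \<Longrightarrow> x < c \<Longrightarrow> 0 < v x"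
    and vle: "\<And>x. c - d < x \<Longrightarrow> x < c \<Longrightarrow> v x \<le> K * (c - x)"
    and gc: "\<And>x. c - d < x \<Longrightarrow> x < c \<Longrightarrow> isCont g x"
    and r0: "c - d < r0" "r0 < c"
  shows "\<exists>rho phi. rho 0 = r0 \<and> phi 0 = phi0 \<and> (\<forall>t\<ge>0. r0 \<le> rho t \<and> rho t < c \<and>
           (rho has_real_derivative v (rho t)) (at t) \<and> (phi has_real_derivative g (rho t)) (at t))"
proof -
  have Kp: "0 < K" using vpos[OF r0] vle[OF r0] r0 by (smt (verit) mult_nonpos_nonneg)
  have "\<exists>F. \<forall>x :: real. ereal (c - d) < x \<longrightarrow> x < ereal c \<longrightarrow> (F has_real_derivative (\<lambda>x. 1 / v x) x) (at x)"
  proof (rule antider)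
    show "ereal (c - d) < ereal c" using d by simp
    fix x :: real assume "ereal (c - d) < x" "x < ereal c"
    then have x: "c - d < x" "x < c" by auto
    have "v x \<noteq> 0" using vpos[OF x] by simp
    then show "isCont (\<lambda>x. 1 / v x) x" by (rule isCont_divide[OF continuous_const vc[OF x]])
  qed
  then obtain F0 where F0: "\<And>x. c - d < x \<Longrightarrow> x < c \<Longrightarrow> (F0 has_real_derivative 1 / v x) (at x)" by auto
  define F where "F x = F0 x - F0 r0" for x
  have dF: "(F has_real_derivative 1 / v x) (at x)" if "c - d < x" "x < c" for x
    unfolding F_def using DERIV_diff[OF F0[OF that] DERIV_const[of "F0 r0"]] by simp
  have cF: "isCont F x" if "c - d < x" "x < c" for x using dF[OF that] by (rule DERIV_isCont)
  have Fr0: "F r0 = 0" by (simp add: F_def)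
  have mono: "F x < F y" if "c - d < x" "x < y" "y < c" for x y
  proof (rule DERIV_pos_imp_increasing[OF that(2)])
    fix z assume "x \<le> z" "z \<le> y"
    then have z: "c - d < z" "z < c" using that by auto
    show "\<exists>D. (F has_real_derivative D) (at z) \<and> D > 0" using dF[OF z] vpos[OF z] by auto
  qed
  have monole: "x \<le> y" if "c - d < x" "x < c" "c - d < y" "y < c" "F x \<le> F y" for x y
  proof (rule ccontr)
    assume "\<not> x \<le> y"
    have "F y < F x" by (rule mono) (use that \<open>\<not> x \<le> y\<close> in auto)
    then show False using that(5) by simp
  qed
  have inj: "x = y" if "c - d < x" "x < c" "c - d < y" "y < c" "F x = F y" for x y
  proof (rule order_antisym)
    show "x \<le> y" using monole[of x y] that by simp
    show "y \<le> x" using monole[of y x] that by simp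
  qed
  have lowF: "(ln (c - r0) - ln (c - x)) / K \<le> F x" if "r0 \<le> x" "x < c" for x
  proof -
    have "(\<lambda>y. F y + ln (c - y) / K) r0 \<le> (\<lambda>y. F y + ln (c - y) / K) x"
    proof (rule DERIV_nonneg_imp_nondecreasing[OF that(1)])
      fix y assume y: "r0 \<le> y" "y \<le> x"
      have y1: "c - d < y" "y < c" using y r0 that by auto
      have "((\<lambda>y. F y + ln (c - y) / K) has_real_derivative 1 / v y + (- 1 / (c - y)) / K) (at y)"
      proof -
        have "((\<lambda>y. ln (c - y)) has_real_derivative (- 1) / (c - y)) (at y)"
          using y1 by (auto intro!: derivative_eq_intros)
        then show ?thesis by (intro DERIV_add dF[OF y1] DERIV_cdivide)
      qed
      moreover have "1 / (K * (c - y)) \<le> 1 / v y"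
        using vle[OF y1] vpos[OF y1] by (intro divide_left_mono) auto
      then have "0 \<le> 1 / v y + (- 1 / (c - y)) / K" using Kp y1 by (simp add: field_simps)
      ultimately show "\<exists>D. ((\<lambda>y. F y + ln (c - y) / K) has_real_derivative D) (at y) \<and> 0 \<le> D" by blast
    qed
    then show ?thesis using Fr0 Kp by (simp add: field_simps)
  qed
  have big: "\<exists>x. r0 < x \<and> x < c \<and> t < F x" for t
  proof -
    define x where "x = c - (c - r0) * exp (- (K * \<bar>t\<bar> + 1))"
    have "0 \<le> K * \<bar>t\<bar>" using Kp by simp
    then have e1: "exp (- (K * \<bar>t\<bar> + 1)) < 1" by simp
    have "(c - r0) * exp (- (K * \<bar>t\<bar> + 1)) < (c - r0) * 1"
      using e1 r0 by (intro mult_strict_left_mono) auto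
    then have xr: "r0 < x" unfolding x_def by simp
    have xc: "x < c" using r0 by (simp add: x_def)
    have "ln (c - x) = ln (c - r0) - (K * \<bar>t\<bar> + 1)" using r0 by (simp add: x_def ln_mult)
    then have "(ln (c - r0) - ln (c - x)) / K = \<bar>t\<bar> + 1 / K" using Kp by (simp add: field_simps)
    moreover have "t < \<bar>t\<bar> + 1 / K" using Kp by (smt (verit) divide_pos_pos)
    ultimately show ?thesis using lowF[of x] xr xc by (intro exI[of _ x]) auto
  qed
  define a where "a = (c - d + r0) / 2"
  have a: "c - d < a" "a < r0" using r0 by (auto simp: a_def)
  have "F a < F r0" by (rule mono) (use a r0 in auto)
  then have Fa: "F a < 0" using Fr0 by simp
  have ex: "\<exists>x. a < x \<and> x < c \<and> F x = t" if Ft: "F a < t" for t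
  proof -
    obtain b where b: "r0 < b" "b < c" "t < F b" using big by blast
    have "continuous_on {a..b} F" using a b by (intro continuous_at_imp_continuous_on ballI cF) auto
    moreover have "a \<le> b" using a b by simp
    ultimately obtain x where x: "a \<le> x" "x \<le> b" "F x = t" using IVT'[of F a t b] Ft b(3) by fastforce
    have "x \<noteq> a" using x(3) Ft by auto
    then have "a < x" using x(1) by simp
    then show ?thesis using x b by (intro exI[of _ x]) simp
  qed
  define rho where "rho t = (THE x. a < x \<and> x < c \<and> F x = t)" for t
  have rho: "a < rho t \<and> rho t < c \<and> F (rho t) = t" if Ft: "F a < t" for t
  proof -
    obtain x where x: "a < x" "x < c" "F x = t" using ex[OF Ft] by blast
    have "\<exists>!x. a < x \<and> x < c \<and> F x = t"
    proof (rule ex1I[of _ x])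
      show "a < x \<and> x < c \<and> F x = t" using x by simp
      fix y assume yy: "a < y \<and> y < c \<and> F y = t"
      show "y = x" by (rule inj) (use x a yy in auto)
    qed
    then show ?thesis unfolding rho_def by (rule theI')
  qed
  have rhoF: "rho (F x) = x" if "a < x" "x < c" for x
  proof -
    have "F a < F x" by (rule mono) (use a that in auto)
    then have rr: "a < rho (F x)" "rho (F x) < c" "F (rho (F x)) = F x" using rho[of "F x"] by auto
    show ?thesis by (rule inj) (use rr a that in auto)
  qed
  have drho: "(rho has_real_derivative v (rho t)) (at t)" and crho: "isCont rho t" if Ft: "F a < t" for t
  proof -
    obtain x where x: "a < x" "x < c" "F x = t" using rho[OF Ft] by blast
    have "isCont rho (F x)"
    proof (rule isCont_inverse_function2[of "(a + x)/2" x "(x + c)/2"])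
      fix z assume "(a + x)/2 \<le> z" "z \<le> (x + c)/2"
      then have z: "a < z" "z < c" using x by auto
      show "rho (F z) = z" using rhoF[OF z] .
      show "isCont F z" using cF z a by auto
    qed (use x in auto)
    then show ct: "isCont rho t" using x by simp
    have "(rho has_real_derivative inverse (1 / v (rho t))) (at t)"
    proof (rule DERIV_inverse_function[where f=F and g=rho and x=t and D="1 / v (rho t)" and a="F a" and b="t + 1"])
      show "(F has_real_derivative 1 / v (rho t)) (at (rho t))" using rho[OF Ft] a by (intro dF) auto
      show "1 / v (rho t) \<noteq> 0" using rho[OF Ft] a vpos[of "rho t"] by auto
    next
      show "F a < t" using Ft .
    next
      show "t < t + 1" by simp
    next
      fix y assume "F a < y" "y < t + 1"
      then show "F (rho y) = y" using rho[of y] by blast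
    next
      show "isCont rho t" using ct .
    qed
    then show "(rho has_real_derivative v (rho t)) (at t)" by simp
  qed
  have "\<exists>P. \<forall>t :: real. ereal (F a) < t \<longrightarrow> t < \<infinity> \<longrightarrow> (P has_real_derivative (\<lambda>t. g (rho t)) t) (at t)"
  proof (rule antider)
    fix t :: real assume "ereal (F a) < t" "t < \<infinity>"
    then have t: "F a < t" by simp
    have "isCont g (rho t)" using rho[OF t] a by (intro gc) auto
    then show "isCont (\<lambda>t. g (rho t)) t" using crho[OF t] by (rule isCont_o2[rotated])
  qed simp
  then obtain P where P: "\<And>t. F a < t \<Longrightarrow> (P has_real_derivative g (rho t)) (at t)" by auto
  define phi where "phi t = P t - P 0 + phi0" for t
  show ?thesis
  proof (rule exI[of _ rho], rule exI[of _ phi], intro conjI allI impI)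
    show "rho 0 = r0" using rhoF[of r0] a r0 Fr0 by simp
    show "phi 0 = phi0" by (simp add: phi_def)
    fix t :: real assume t: "0 \<le> t"
    then have t': "F a < t" using Fa by simp
    show "(rho has_real_derivative v (rho t)) (at t)" using drho[OF t'] .
    show "(phi has_real_derivative g (rho t)) (at t)" unfolding phi_def using P[OF t'] by (auto intro!: derivative_eq_intros)
    show "rho t < c" using rho[OF t'] by simp
    have rt: "a < rho t" "rho t < c" "F (rho t) = t" using rho[OF t'] by auto
    show "r0 \<le> rho t"
    proof (rule monole)
      show "F r0 \<le> F (rho t)" using rt t Fr0 by simp
    qed (use rt a r0 in auto)
  qed
qed


lemma valg:
  fixes a b :: real
  assumes a: "a < 0" "-1 \<le> a" and b: "b > 0" and e: "a\<^sup>2 + b\<^sup>2 > 1"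
  defines "v \<equiv> (a * (a\<^sup>2 + b\<^sup>2 - 1) + b * sqrt (a\<^sup>2 + b\<^sup>2 - 1)) / (a\<^sup>2 + b\<^sup>2)"
  shows "v \<le> 2 * (1 + a) \<and> (-1 < a \<longrightarrow> 0 < v)"
proof -
  define s where "s = sqrt (a\<^sup>2 + b\<^sup>2 - 1)"
  have s2: "s\<^sup>2 = a\<^sup>2 + b\<^sup>2 - 1" using e by (simp add: s_def)
  have s0: "s > 0" using e by (simp add: s_def)
  have "(-a) * (-a) \<le> 1 * 1" using a by (intro mult_mono) auto
  then have a2: "a\<^sup>2 \<le> 1" by (simp add: power2_eq_square)
  have "s\<^sup>2 \<le> b\<^sup>2" using s2 a2 by linarith
  then have sb: "s \<le> b" using b by (auto intro: power2_le_imp_le)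
  have den: "b - a * s \<ge> b" using a s0 by (simp add: mult_nonpos_nonneg)
  have pos: "a\<^sup>2 + b\<^sup>2 > 0" using e by linarith
  have id: "v * (b - a * s) = s * (1 - a\<^sup>2)"
  proof -
    have "v * (a\<^sup>2 + b\<^sup>2) = a * (a\<^sup>2 + b\<^sup>2 - 1) + b * s" unfolding v_def s_def[symmetric] using pos by simp
    also have "\<dots> = s * (a * s + b)" unfolding s2[symmetric] by (simp add: algebra_simps power2_eq_square)
    finally have "v * (a\<^sup>2 + b\<^sup>2) = s * (a * s + b)" .
    hence h1: "v * (a\<^sup>2 + b\<^sup>2) * (b - a * s) = s * ((a * s + b) * (b - a * s))" by simp
    have "(a * s + b) * (b - a * s) = b\<^sup>2 - a\<^sup>2 * s\<^sup>2" by (simp add: algebra_simps power2_eq_square)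
    also have "\<dots> = (1 - a\<^sup>2) * (a\<^sup>2 + b\<^sup>2)" unfolding s2 by (simp add: algebra_simps power2_eq_square)
    finally have h2: "(a * s + b) * (b - a * s) = (1 - a\<^sup>2) * (a\<^sup>2 + b\<^sup>2)" .
    have "(v * (b - a * s)) * (a\<^sup>2 + b\<^sup>2) = (s * (1 - a\<^sup>2)) * (a\<^sup>2 + b\<^sup>2)"
      using h1 unfolding h2 by (simp add: algebra_simps)
    moreover have pos': "a\<^sup>2 + b\<^sup>2 \<noteq> 0" using pos by linarith
    ultimately show ?thesis using mult_right_cancel[OF pos'] by blast
  qed
  have vv: "v = s * (1 - a) * (1 + a) / (b - a * s)" using id den b
    by (simp add: field_simps power2_eq_square)
  have "s * (1 - a) * (1 + a) / (b - a * s) \<le> s * (1 - a) * (1 + a) / b"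
    using den b s0 a by (intro divide_left_mono) (auto intro!: mult_nonneg_nonneg)
  also have "\<dots> \<le> 2 * (1 + a)"
  proof -
    have "s * (1 - a) * (1 + a) \<le> b * 2 * (1 + a)"
      using sb a s0 b by (intro mult_right_mono mult_mono) auto
    thus ?thesis using b by (simp add: divide_le_eq algebra_simps)
  qed
  finally have "v \<le> 2 * (1 + a)" using vv by simp
  moreover have "-1 < a \<longrightarrow> 0 < v" using vv s0 a den b by auto
  ultimately show ?thesis by blast
qed

lemma smooth_cont:
  assumes "smooth_on {0<..} f" "0 < x"
  shows "isCont f x" and "f differentiable (at x)"
proof -
  show d: "f differentiable (at x)" using assms unfolding smooth_on_def
    by (metis funpow_0 greaterThan_iff)
  then obtain D where "(f has_real_derivative D) (at x)" by (auto simp: real_differentiable_def)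
  then show "isCont f x" by (rule DERIV_isCont)
qed

theorem mainTheorem5:
  fixes A B :: "real \<Rightarrow> real" and rm rp r1 :: real
  assumes smoothA: "smooth_on {0<..} A" and smoothB: "smooth_on {0<..} B"
    and rm_nonneg: "0 \<le> rm" and r1_in: "rm < r1" "r1 < rp"
    and ergo: "\<forall>r. rm < r \<and> r < rp \<longrightarrow> (A r)\<^sup>2 + (B r)\<^sup>2 > 1"
    and A_neg: "\<exists>e>0. \<forall>r. \<bar>r - r1\<bar> < e \<longrightarrow> A r < 0"
    and B_pos: "B r1 > 0"
    and double_root: "\<exists>C :: real \<Rightarrow> real. \<exists>e>0. \<forall>r. \<bar>r - r1\<bar> < e \<longrightarrow>
                        A r + 1 = C r * (r - r1)\<^sup>2 \<and> C r > 0"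
  shows "horizon_plus A B rm rp r1
       \<and> plus_trajectory A B rm rp UNIV (\<lambda>t. r1) (\<lambda>t. t * (B r1 / r1))
       \<and> vphi_plus A B r1 = B r1 / r1 \<and> B r1 / r1 \<noteq> 0
       \<and> (\<exists>d>0. \<forall>r. 0 < \<bar>r - r1\<bar> \<and> \<bar>r - r1\<bar> < d \<longrightarrow> vrho_plus A B r > 0)
       \<and> (\<exists>d>0.
            (\<forall>r0 phi0. r1 - d < r0 \<and> r0 < r1 \<longrightarrow>
               (\<exists>rho phi. plus_trajectory A B rm rp {0..} rho phi \<and> rho 0 = r0 \<and> phi 0 = phi0))
          \<and> (\<forall>rho phi. plus_trajectory A B rm rp {0..} rho phi \<and> r1 - d < rho 0 \<and> rho 0 < r1 \<longrightarrow>
               (rho \<longlongrightarrow> r1) at_top)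
          \<and> (\<forall>r0 phi0. r1 < r0 \<and> r0 < r1 + d \<longrightarrow>
               (\<exists>rho phi. plus_trajectory A B rm rp {..0} rho phi \<and> rho 0 = r0 \<and> phi 0 = phi0))
          \<and> (\<forall>rho phi. plus_trajectory A B rm rp {..0} rho phi \<and> r1 < rho 0 \<and> rho 0 < r1 + d \<longrightarrow>
               (rho \<longlongrightarrow> r1) at_bot))"
proof -
  let ?v = "vrho_plus A B" and ?w = "vphi_plus A B"
  obtain C e1 where e1: "e1 > 0" and dr: "\<And>r. \<bar>r - r1\<bar> < e1 \<Longrightarrow> A r + 1 = C r * (r - r1)\<^sup>2 \<and> C r > 0"
    using double_root by blast
  obtain e2 where e2: "e2 > 0" and An: "\<And>r. \<bar>r - r1\<bar> < e2 \<Longrightarrow> A r < 0" using A_neg by blast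
  have Ar1: "A r1 = -1" using dr[of r1] e1 by simp
  have r1p: "0 < r1" using rm_nonneg r1_in by simp
  have cA: "isCont A x" and cB: "isCont B x" if "0 < x" for x
    using smooth_cont[OF smoothA that] smooth_cont[OF smoothB that] by auto
  have "\<forall>\<^sub>F x in at r1. 0 < B x" using cB[OF r1p] B_pos unfolding isCont_def by (rule order_tendstoD)
  then obtain e3 where e3: "e3 > 0" and e3': "\<And>x. x \<noteq> r1 \<Longrightarrow> dist x r1 < e3 \<Longrightarrow> 0 < B x"
    unfolding eventually_at by auto
  have Bp: "0 < B x" if "\<bar>x - r1\<bar> < e3" for x
    using e3'[of x] that B_pos by (cases "x = r1") (auto simp: dist_real_def)
  obtain A' where dA: "(A has_real_derivative A') (at r1)"
    using smooth_cont(2)[OF smoothA r1p] by (auto simp: real_differentiable_def)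
  have "\<forall>\<^sub>F h in at 0. dist ((A (r1 + h) - A r1) / h) A' < 1"
    using dA unfolding DERIV_def by (rule tendstoD) simp
  then obtain e4 where e4: "e4 > 0" and e4': "\<And>h. h \<noteq> 0 \<Longrightarrow> dist h 0 < e4 \<Longrightarrow> dist ((A (r1 + h) - A r1) / h) A' < 1"
    unfolding eventually_at by auto
  define Kb where "Kb = \<bar>A'\<bar> + 1"
  have Kbp: "0 < Kb" by (simp add: Kb_def)
  have Alip: "A r + 1 \<le> Kb * \<bar>r - r1\<bar>" if "\<bar>r - r1\<bar> < e4" for r
  proof (cases "r = r1")
    case True then show ?thesis using Ar1 by simp
  next
    case False
    define h where "h = r - r1"
    have h0: "h \<noteq> 0" using False by (simp add: h_def)
    have "\<bar>(A (r1 + h) - A r1) / h - A'\<bar> < 1" using e4'[OF h0] that by (simp add: h_def dist_real_def)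
    then have "\<bar>(A (r1 + h) - A r1) / h\<bar> \<le> Kb" unfolding Kb_def by linarith
    then have "\<bar>A (r1 + h) - A r1\<bar> \<le> Kb * \<bar>h\<bar>" using h0 by (simp add: abs_divide divide_le_eq)
    then show ?thesis using Ar1 by (simp add: h_def)
  qed
  define d where "d = min (min e1 e2) (min (min e3 e4) (min (r1 - rm) (rp - r1)))"
  have dp: "0 < d" using e1 e2 e3 e4 r1_in by (simp add: d_def)
  have dN: "rm < r \<and> r < rp \<and> 0 < r" if "\<bar>r - r1\<bar> < d" for r
    using that rm_nonneg by (auto simp: d_def abs_less_iff)
  have V: "0 < ?v r \<and> ?v r \<le> 2 * Kb * \<bar>r - r1\<bar>" if "\<bar>r - r1\<bar> < d" "r \<noteq> r1" for r
  proof -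
    have r: "\<bar>r - r1\<bar> < e1" "\<bar>r - r1\<bar> < e2" "\<bar>r - r1\<bar> < e3" "\<bar>r - r1\<bar> < e4"
      using that by (auto simp: d_def)
    have "0 < (r - r1)\<^sup>2" using that by simp
    then have Cp: "0 < C r * (r - r1)\<^sup>2" using dr[OF r(1)] by simp
    have ineqs: "A r < 0" "-1 < A r" "0 < B r" "(A r)\<^sup>2 + (B r)\<^sup>2 > 1"
      using An[OF r(2)] dr[OF r(1)] Cp Bp[OF r(3)] ergo dN[OF that(1)] by auto
    have "?v r \<le> 2 * (1 + A r) \<and> (-1 < A r \<longrightarrow> 0 < ?v r)"
      unfolding vrho_plus_def sfun_def using ineqs by (intro valg) auto
    moreover have "2 * (1 + A r) \<le> 2 * Kb * \<bar>r - r1\<bar>" using Alip[OF r(4)] by simp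
    ultimately show ?thesis using ineqs by auto
  qed
  have vfun: "?v = (\<lambda>r. (A r * ((A r)\<^sup>2 + (B r)\<^sup>2 - 1) + B r * sqrt ((A r)\<^sup>2 + (B r)\<^sup>2 - 1)) / ((A r)\<^sup>2 + (B r)\<^sup>2))"
    by (rule ext) (simp add: vrho_plus_def sfun_def)
  have wfun: "?w = (\<lambda>r. sqrt ((A r)\<^sup>2 + (B r)\<^sup>2 - 1) * (B r * sqrt ((A r)\<^sup>2 + (B r)\<^sup>2 - 1) - A r) / (r * ((A r)\<^sup>2 + (B r)\<^sup>2)))"
    by (rule ext) (simp add: vphi_plus_def sfun_def)
  have Cv: "isCont ?v r" and Cw: "isCont ?w r" if "rm < r" "r < rp" for r
  proof -
    have r0: "0 < r" using that rm_nonneg by simp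
    have ne: "(A r)\<^sup>2 + (B r)\<^sup>2 \<noteq> 0" using ergo that by force
    have ne2: "r * ((A r)\<^sup>2 + (B r)\<^sup>2) \<noteq> 0" using ne r0 by simp
    show "isCont ?v r" unfolding vfun using cA[OF r0] cB[OF r0] ne
      by (intro continuous_intros) auto
    show "isCont ?w r" unfolding wfun using cA[OF r0] cB[OF r0] ne2
      by (intro continuous_intros) auto
  qed
  have vr1: "?v r1 = 0" and wr1: "?w r1 = B r1 / r1"
  proof -
    have s: "sfun A B r1 = B r1" using B_pos Ar1 by (simp add: sfun_def)
    show "?v r1 = 0" unfolding vrho_plus_def s Ar1 by (simp add: power2_eq_square)
    have nz: "1 + (B r1)\<^sup>2 \<noteq> 0" by (smt (verit) zero_le_power2)
    have "?w r1 = B r1 * (1 + (B r1)\<^sup>2) / (r1 * (1 + (B r1)\<^sup>2))"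
      unfolding vphi_plus_def s Ar1 by (simp add: power2_eq_square algebra_simps)
    also have "\<dots> = B r1 / r1" by (rule mult_divide_mult_cancel_right[OF nz])
    finally show "?w r1 = B r1 / r1" .
  qed
  define om where "om = B r1 / r1"
  have omn: "om \<noteq> 0" using B_pos r1p by (simp add: om_def)
  have traj: "plus_trajectory A B rm rp UNIV (\<lambda>t. r1) (\<lambda>t. t * om)"
    unfolding plus_trajectory_def using r1_in r1p vr1 wr1
    by (auto intro!: derivative_eq_intros simp: om_def)
  have img: "(\<lambda>t. (r1 * cos (t * om), r1 * sin (t * om))) ` UNIV = {p :: real \<times> real. norm p = r1}"
  proof (intro set_eqI iffI)
    fix p :: "real \<times> real" assume "p \<in> (\<lambda>t. (r1 * cos (t * om), r1 * sin (t * om))) ` UNIV"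
    then obtain t where p: "p = (r1 * cos (t * om), r1 * sin (t * om))" by auto
    have "(r1 * cos (t * om))\<^sup>2 + (r1 * sin (t * om))\<^sup>2 = r1\<^sup>2 * ((cos (t * om))\<^sup>2 + (sin (t * om))\<^sup>2)"
      by (simp only: power_mult_distrib distrib_left)
    also have "\<dots> = r1\<^sup>2" by (simp only: sin_cos_squared_add2 mult_1_right)
    finally have "norm p = sqrt (r1\<^sup>2)" unfolding p norm_Pair by simp
    also have "\<dots> = r1" using r1p by simp
    finally show "p \<in> {p. norm p = r1}" by simp
  next
    fix p :: "real \<times> real" assume "p \<in> {p. norm p = r1}"
    then have n: "sqrt ((fst p)\<^sup>2 + (snd p)\<^sup>2) = r1" by (cases p) (simp add: norm_Pair)
    then have "(fst p)\<^sup>2 + (snd p)\<^sup>2 = r1\<^sup>2" using r1p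
      by (metis real_sqrt_pow2 add_nonneg_nonneg zero_le_power2)
    then have "(fst p / r1)\<^sup>2 + (snd p / r1)\<^sup>2 = 1" using r1p by (simp add: power_divide field_simps)
    then obtain th where th: "fst p / r1 = cos th" "snd p / r1 = sin th" using sincos_total_2pi by metis
    have "p = (r1 * cos ((th / om) * om), r1 * sin ((th / om) * om))"
      using th omn r1p by (cases p) (simp add: field_simps)
    then show "p \<in> (\<lambda>t. (r1 * cos (t * om), r1 * sin (t * om))) ` UNIV" by blast
  qed
  have hor: "horizon_plus A B rm rp r1"
    unfolding horizon_plus_def using r1_in traj img by blast
  have P4: "\<exists>d>0. \<forall>r. 0 < \<bar>r - r1\<bar> \<and> \<bar>r - r1\<bar> < d \<longrightarrow> ?v r > 0"
    using dp V by (intro exI[of _ d]) auto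
  have FE: "\<exists>rho phi. plus_trajectory A B rm rp {0..} rho phi \<and> rho 0 = r0 \<and> phi 0 = phi0"
    if r0: "r1 - d < r0" "r0 < r1" for r0 phi0
  proof -
    have "\<exists>rho phi. rho 0 = r0 \<and> phi 0 = phi0 \<and> (\<forall>t\<ge>0. r0 \<le> rho t \<and> rho t < r1 \<and>
           (rho has_real_derivative ?v (rho t)) (at t) \<and> (phi has_real_derivative ?w (rho t)) (at t))"
    proof (rule exist_fwd[OF dp])
      fix x assume x: "r1 - d < x" "x < r1"
      then have ax: "\<bar>x - r1\<bar> < d" "x \<noteq> r1" by auto
      show "isCont ?v x" "isCont ?w x" using dN[OF ax(1)] Cv Cw by auto
      show "0 < ?v x" using V[OF ax] by simp
      show "?v x \<le> 2 * Kb * (r1 - x)" using V[OF ax] x by simp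
    qed (use r0 in auto)
    then obtain rho phi where rp: "rho 0 = r0" "phi 0 = phi0"
      "\<And>t. t \<ge> 0 \<Longrightarrow> r0 \<le> rho t \<and> rho t < r1 \<and> (rho has_real_derivative ?v (rho t)) (at t) \<and> (phi has_real_derivative ?w (rho t)) (at t)"
      by blast
    have "plus_trajectory A B rm rp {0..} rho phi"
      unfolding plus_trajectory_def
    proof
      fix t :: real assume "t \<in> {0..}"
      then have t: "r0 \<le> rho t \<and> rho t < r1 \<and> (rho has_real_derivative ?v (rho t)) (at t) \<and> (phi has_real_derivative ?w (rho t)) (at t)"
        using rp(3) by auto
      have "rm < rho t" using t r0 dN[of r0] by auto
      then show "rm < rho t \<and> rho t < rp \<and> (rho has_real_derivative ?v (rho t)) (at t within {0..}) \<and>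
          (phi has_real_derivative ?w (rho t)) (at t within {0..})"
        using t r1_in by (auto intro: has_field_derivative_at_within)
    qed
    then show ?thesis using rp by blast
  qed
  have FC: "(rho \<longlongrightarrow> r1) at_top"
    if tr: "plus_trajectory A B rm rp {0..} rho phi" and r0: "r1 - d < rho 0" "rho 0 < r1" for rho phi
  proof -
    define u where "u t = r1 - rho t" for t
    define u' where "u' t = - ?v (rho t)" for t
    have der: "(u has_real_derivative u' t) (at t within {0..})" if t0: "0 \<le> t" for t
    proof -
      have "(rho has_real_derivative ?v (rho t)) (at t within {0..})" using tr t0 unfolding plus_trajectory_def by auto
      then show ?thesis unfolding u_def u'_def using DERIV_diff[OF DERIV_const[of r1]] by fastforce
    qed
    have u0: "0 < u 0" "u 0 < d" using r0 by (auto simp: u_def)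
    have bnd: "- (2 * Kb) * u t \<le> u' t \<and> u' t \<le> 0" if "0 \<le> t" "0 < u t" "u t < d" for t
    proof -
      have a: "\<bar>rho t - r1\<bar> < d" "rho t \<noteq> r1" using that by (auto simp: u_def)
      have "\<bar>rho t - r1\<bar> = u t" using that by (simp add: u_def)
      then show ?thesis using V[OF a] by (simp add: u'_def)
    qed
    have good: "\<forall>t\<ge>0. 0 < u t \<and> u t \<le> u 0"
      by (rule decay[of u u' d "2 * Kb"]) (use der u0 bnd in auto)
    have neg: "u' t \<le> 0" if "0 \<le> t" for t using bnd[OF that] good that u0 by force
    have steep: "\<exists>m>0. \<forall>t\<ge>0. \<epsilon> \<le> u t \<longrightarrow> u' t \<le> - m" if ep: "0 < \<epsilon>" for \<epsilon>
    proof (cases "u 0 < \<epsilon>")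
      case True
      then show ?thesis using good by (intro exI[of _ 1]) force
    next
      case False
      define S where "S = {r1 - u 0 .. r1 - \<epsilon>}"
      have Ssub: "\<bar>x - r1\<bar> < d \<and> x \<noteq> r1" if "x \<in> S" for x
        using that u0 ep by (auto simp: S_def)
      have "continuous_on S ?v"
        by (rule continuous_at_imp_continuous_on) (use Ssub dN Cv in blast)
      moreover have "S \<noteq> {}" using False by (simp add: S_def)
      ultimately obtain x0 where x0: "x0 \<in> S" "\<And>y. y \<in> S \<Longrightarrow> ?v x0 \<le> ?v y"
        using continuous_attains_inf[of S ?v] by (auto simp: S_def)
      have m0: "0 < ?v x0" using V Ssub[OF x0(1)] by blast
      show ?thesis
      proof (intro exI[of _ "?v x0"] conjI allI impI m0)
        fix t :: real assume "0 \<le> t" "\<epsilon> \<le> u t"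
        then have "rho t \<in> S" using good by (auto simp: S_def u_def)
        then show "u' t \<le> - ?v x0" using x0(2) by (simp add: u'_def)
      qed
    qed
    have "(u \<longlongrightarrow> 0) at_top" by (rule conv[of u u']) (use der good neg steep in auto)
    then have "((\<lambda>t. r1 - u t) \<longlongrightarrow> r1 - 0) at_top" by (intro tendsto_diff tendsto_const)
    moreover have "(\<lambda>t. r1 - u t) = rho" by (simp add: u_def)
    ultimately show ?thesis by simp
  qed
  have BE: "\<exists>rho phi. plus_trajectory A B rm rp {..0} rho phi \<and> rho 0 = r0 \<and> phi 0 = phi0"
    if r0: "r1 < r0" "r0 < r1 + d" for r0 phi0
  proof -
    define w where "w x = ?v (2 * r1 - x)" for x
    define gg where "gg x = - ?w (2 * r1 - x)" for x
    have "\<exists>rho phi. rho 0 = 2 * r1 - r0 \<and> phi 0 = phi0 \<and> (\<forall>t\<ge>0. 2 * r1 - r0 \<le> rho t \<and> rho t < r1 \<and>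
           (rho has_real_derivative w (rho t)) (at t) \<and> (phi has_real_derivative gg (rho t)) (at t))"
    proof (rule exist_fwd[OF dp])
      fix x assume x: "r1 - d < x" "x < r1"
      then have ax: "\<bar>(2 * r1 - x) - r1\<bar> < d" "2 * r1 - x \<noteq> r1" by auto
      have i1: "isCont (\<lambda>x. 2 * r1 - x) x" by (intro continuous_intros)
      show "isCont w x" unfolding w_def using dN[OF ax(1)] Cv by (intro isCont_o2[OF i1]) auto
      have "isCont (\<lambda>x. ?w (2 * r1 - x)) x" using dN[OF ax(1)] Cw by (intro isCont_o2[OF i1]) auto
      then show "isCont gg x" unfolding gg_def by (rule isCont_minus)
      show "0 < w x" using V[OF ax] by (simp add: w_def)
      show "w x \<le> 2 * Kb * (r1 - x)" using V[OF ax] x by (simp add: w_def)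
    qed (use r0 in auto)
    then obtain sg ps where sp: "sg 0 = 2 * r1 - r0" "ps 0 = phi0"
      "\<And>t. t \<ge> 0 \<Longrightarrow> 2 * r1 - r0 \<le> sg t \<and> sg t < r1 \<and> (sg has_real_derivative w (sg t)) (at t) \<and> (ps has_real_derivative gg (sg t)) (at t)"
      by blast
    define rho where "rho t = 2 * r1 - sg (- t)" for t
    define phi where "phi t = ps (- t)" for t
    have "plus_trajectory A B rm rp {..0} rho phi"
      unfolding plus_trajectory_def
    proof
      fix t :: real assume "t \<in> {..0}"
      then have t: "2 * r1 - r0 \<le> sg (-t) \<and> sg (-t) < r1 \<and> (sg has_real_derivative w (sg (-t))) (at (-t)) \<and> (ps has_real_derivative gg (sg (-t))) (at (-t))"
        using sp(3)[of "-t"] by auto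
      have rr: "rho t \<le> r0" "r1 < rho t" using t by (auto simp: rho_def)
      have dm: "((\<lambda>x. - x) has_real_derivative -1) (at t)" by (auto intro!: derivative_eq_intros)
      have d1: "((\<lambda>x. sg (- x)) has_real_derivative w (sg (-t)) * -1) (at t)"
        using DERIV_chain2[of sg "w (sg (-t))" "\<lambda>x. - x" t, OF _ dm] t by simp
      have d2: "((\<lambda>x. ps (- x)) has_real_derivative gg (sg (-t)) * -1) (at t)"
        using DERIV_chain2[of ps "gg (sg (-t))" "\<lambda>x. - x" t, OF _ dm] t by simp
      have "(rho has_real_derivative 0 - w (sg (-t)) * -1) (at t)"
        unfolding rho_def by (rule DERIV_diff[OF DERIV_const d1])
      then have "(rho has_real_derivative ?v (rho t)) (at t)" by (simp add: w_def rho_def)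
      moreover have "(phi has_real_derivative ?w (rho t)) (at t)"
        using d2 unfolding phi_def by (simp add: gg_def rho_def)
      ultimately show "rm < rho t \<and> rho t < rp \<and> (rho has_real_derivative ?v (rho t)) (at t within {..0}) \<and>
          (phi has_real_derivative ?w (rho t)) (at t within {..0})"
        using rr r0 dN[of r0] r1_in by (auto intro: has_field_derivative_at_within)
    qed
    moreover have "rho 0 = r0" "phi 0 = phi0" using sp by (auto simp: rho_def phi_def)
    ultimately show ?thesis by blast
  qed
  have BC: "(rho \<longlongrightarrow> r1) at_bot"
    if tr: "plus_trajectory A B rm rp {..0} rho phi" and r0: "r1 < rho 0" "rho 0 < r1 + d" for rho phi
  proof -
    define u where "u t = rho (- t) - r1" for t
    define u' where "u' t = - ?v (rho (- t))" for t
    have der: "(u has_real_derivative u' t) (at t within {0..})" if t0: "0 \<le> t" for t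
    proof -
      have im: "uminus ` {0..} = {..0::real}" by (auto simp: image_iff intro: bexI[of _ "- x" for x])
      have "(rho has_real_derivative ?v (rho (-t))) (at (-t) within {..0})" using tr t0 unfolding plus_trajectory_def by auto
      then have d0: "(rho has_real_derivative ?v (rho (-t))) (at (uminus t) within (uminus ` {0..}))" unfolding im by simp
      have dm: "(uminus has_real_derivative -1) (at t within {0..})" by (auto intro!: derivative_eq_intros)
      have "((rho \<circ> uminus) has_real_derivative ?v (rho (-t)) * -1) (at t within {0..})"
        by (rule DERIV_image_chain[OF d0 dm])
      then have "((\<lambda>x. rho (- x)) has_real_derivative ?v (rho (-t)) * -1) (at t within {0..})"
        by (simp add: comp_def)
      then have "((\<lambda>x. rho (- x) - r1) has_real_derivative ?v (rho (-t)) * -1 - 0) (at t within {0..})"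
        by (rule DERIV_diff[OF _ DERIV_const])
      then show ?thesis unfolding u_def u'_def by simp
    qed
    have u0: "0 < u 0" "u 0 < d" using r0 by (auto simp: u_def)
    have bnd: "- (2 * Kb) * u t \<le> u' t \<and> u' t \<le> 0" if "0 \<le> t" "0 < u t" "u t < d" for t
    proof -
      have a: "\<bar>rho (-t) - r1\<bar> < d" "rho (-t) \<noteq> r1" using that by (auto simp: u_def)
      have "\<bar>rho (-t) - r1\<bar> = u t" using that by (simp add: u_def)
      then show ?thesis using V[OF a] by (simp add: u'_def)
    qed
    have good: "\<forall>t\<ge>0. 0 < u t \<and> u t \<le> u 0"
      by (rule decay[of u u' d "2 * Kb"]) (use der u0 bnd in auto)
    have neg: "u' t \<le> 0" if "0 \<le> t" for t using bnd[OF that] good that u0 by force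
    have steep: "\<exists>m>0. \<forall>t\<ge>0. \<epsilon> \<le> u t \<longrightarrow> u' t \<le> - m" if ep: "0 < \<epsilon>" for \<epsilon>
    proof (cases "u 0 < \<epsilon>")
      case True
      then show ?thesis using good by (intro exI[of _ 1]) force
    next
      case False
      define S where "S = {r1 + \<epsilon> .. r1 + u 0}"
      have Ssub: "\<bar>x - r1\<bar> < d \<and> x \<noteq> r1" if "x \<in> S" for x
        using that u0 ep by (auto simp: S_def)
      have "continuous_on S ?v"
        by (rule continuous_at_imp_continuous_on) (use Ssub dN Cv in blast)
      moreover have "S \<noteq> {}" using False by (simp add: S_def)
      ultimately obtain x0 where x0: "x0 \<in> S" "\<And>y. y \<in> S \<Longrightarrow> ?v x0 \<le> ?v y"
        using continuous_attains_inf[of S ?v] by (auto simp: S_def)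
      have m0: "0 < ?v x0" using V Ssub[OF x0(1)] by blast
      show ?thesis
      proof (intro exI[of _ "?v x0"] conjI allI impI m0)
        fix t :: real assume "0 \<le> t" "\<epsilon> \<le> u t"
        then have "rho (-t) \<in> S" using good by (auto simp: S_def u_def)
        then show "u' t \<le> - ?v x0" using x0(2) by (simp add: u'_def)
      qed
    qed
    have ul: "(u \<longlongrightarrow> 0) at_top" by (rule conv[of u u']) (use der good neg steep in auto)
    have "((\<lambda>s. u (- s)) \<longlongrightarrow> 0) at_bot"
      by (rule filterlim_compose[OF ul filterlim_uminus_at_top_at_bot])
    then have "((\<lambda>s. r1 + u (- s)) \<longlongrightarrow> r1 + 0) at_bot" by (intro tendsto_add tendsto_const)
    moreover have "(\<lambda>s. r1 + u (- s)) = rho" by (simp add: u_def)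
    ultimately show ?thesis by simp
  qed
  show ?thesis
  proof (intro conjI)
    show "horizon_plus A B rm rp r1" by (rule hor)
    show "plus_trajectory A B rm rp UNIV (\<lambda>t. r1) (\<lambda>t. t * (B r1 / r1))" using traj by (simp add: om_def)
    show "?w r1 = B r1 / r1" by (rule wr1)
    show "B r1 / r1 \<noteq> 0" using omn by (simp add: om_def)
    show "\<exists>d>0. \<forall>r. 0 < \<bar>r - r1\<bar> \<and> \<bar>r - r1\<bar> < d \<longrightarrow> ?v r > 0" by (rule P4)
    show "\<exists>d>0.
            (\<forall>r0 phi0. r1 - d < r0 \<and> r0 < r1 \<longrightarrow>
               (\<exists>rho phi. plus_trajectory A B rm rp {0..} rho phi \<and> rho 0 = r0 \<and> phi 0 = phi0))
          \<and> (\<forall>rho phi. plus_trajectory A B rm rp {0..} rho phi \<and> r1 - d < rho 0 \<and> rho 0 < r1 \<longrightarrow>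
               (rho \<longlongrightarrow> r1) at_top)
          \<and> (\<forall>r0 phi0. r1 < r0 \<and> r0 < r1 + d \<longrightarrow>
               (\<exists>rho phi. plus_trajectory A B rm rp {..0} rho phi \<and> rho 0 = r0 \<and> phi 0 = phi0))
          \<and> (\<forall>rho phi. plus_trajectory A B rm rp {..0} rho phi \<and> r1 < rho 0 \<and> rho 0 < r1 + d \<longrightarrow>
               (rho \<longlongrightarrow> r1) at_bot)"
      using dp FE FC BE BC by (intro exI[of _ d]) blast
  qed
qed
end
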